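(* Let $p$ be an odd prime, $r,m$ positive integers and $s\in\{1,2,\dots,mp^{r-1}\}$. Then $$\binom{mp^{r-1}}{s}\binom{2sp}{sp}\binom{2(mp^{r-1}-s)p}{(mp^{r-1}-s)p}\equiv\begin{cases}\binom{m}{s}\binom{2s}{s}\binom{2(m-s)}{m-s}(1+9m)\pmod{p^{r+2}} & \text{if } r=1 \text{ and } p=3,\\ \binom{mp^{r-1}}{s}\binom{2s}{s}\binom{2(mp^{r-1}-s)}{mp^{r-1}-s}\pmod{p^{r+2}} & \text{if } r>1 \text{ or } p>3.\end{cases}$$ *)

theory Defs
  imports "HOL-Number_Theory.Number_Theory"
begin

end

theory Submission
  imports Defs
begin


definition SS :: "nat \<Rightarrow> nat \<Rightarrow> nat set" where
  "SS p a = {j \<in> {1..a*p}. \<not> p dvd j}"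
definition QQ :: "nat \<Rightarrow> nat \<Rightarrow> int" where
  "QQ p a = (\<Prod>j\<in>SS p a. int j)"
definition FF :: "nat \<Rightarrow> nat \<Rightarrow> int" where
  "FF p a = (\<Prod>j\<in>SS p a. int (2*a*p) - int j)"

lemma finite_SS[simp]: "finite (SS p a)"
  unfolding SS_def by auto

lemma mults_eq:
  fixes p a :: nat
  assumes "p > 0"
  shows "{j \<in> {1..a*p}. p dvd j} = (\<lambda>k. p*k) ` {1..a}"
proof -
  have "j \<in> (\<lambda>k. p*k) ` {1..a}" if h: "j \<in> {1..a*p}" "p dvd j" for j
  proof -
    obtain k where k: "j = p*k" using h(2) by (elim dvdE)
    have "1 \<le> k" using h k by (cases "k = 0") auto
    moreover have "k \<le> a" using k h assms by (simp add: mult.commute)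
    ultimately show ?thesis using k by auto
  qed
  moreover have "j \<in> {1..a*p}" "p dvd j" if "j \<in> (\<lambda>k. p*k) ` {1..a}" for j
    using that assms by (auto simp: mult.commute intro: mult_le_mono)
  ultimately show ?thesis by blast
qed

lemma fact_decomp:
  fixes p a :: nat
  assumes "p > 0"
  shows "(fact (a*p) :: int) = int p ^ a * fact a * QQ p a"
proof -
  have split: "{1..a*p} = SS p a \<union> {j \<in> {1..a*p}. p dvd j}"
    unfolding SS_def by auto
  have disj: "SS p a \<inter> {j \<in> {1..a*p}. p dvd j} = {}"
    unfolding SS_def by auto
  have "(fact (a*p) :: int) = (\<Prod>j\<in>{1..a*p}. int j)"
    by (simp only: fact_prod of_nat_prod)
  also have "\<dots> = QQ p a * (\<Prod>j\<in>{j \<in> {1..a*p}. p dvd j}. int j)"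
    unfolding QQ_def by (subst split, rule prod.union_disjoint) (use disj in auto)
  also have "(\<Prod>j\<in>{j \<in> {1..a*p}. p dvd j}. int j) = (\<Prod>k\<in>{1..a}. int p * int k)"
    unfolding mults_eq[OF assms] by (subst prod.reindex) (use assms in \<open>auto simp: inj_on_def\<close>)
  also have "\<dots> = int p ^ a * (\<Prod>k\<in>{1..a}. int k)"
    by (simp only: prod.distrib prod_constant card_atLeastAtMost diff_Suc_1)
  also have "(\<Prod>k\<in>{1..a}. int k) = fact a"
    by (simp only: fact_prod of_nat_prod)
  finally show ?thesis by simp
qed

lemma card_SS:
  fixes p a :: nat
  assumes "p > 0"
  shows "card (SS p a) = a*p - a"
proof -
  have split: "{1..a*p} = SS p a \<union> {j \<in> {1..a*p}. p dvd j}"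
    unfolding SS_def by auto
  have disj: "SS p a \<inter> {j \<in> {1..a*p}. p dvd j} = {}"
    unfolding SS_def by auto
  have "card {j \<in> {1..a*p}. p dvd j} = a"
    unfolding mults_eq[OF assms] using assms by (simp add: card_image inj_on_def)
  moreover have "card {1..a*p} = card (SS p a) + card {j \<in> {1..a*p}. p dvd j}"
    by (subst split, rule card_Un_disjoint) (use disj in auto)
  ultimately show ?thesis by simp
qed

lemma SS_double:
  fixes p a :: nat
  assumes "p > 0"
  shows "SS p (2*a) = SS p a \<union> (\<lambda>j. 2*a*p - j) ` SS p a"
    and "SS p a \<inter> (\<lambda>j. 2*a*p - j) ` SS p a = {}"
proof -
  have A: "\<not> p dvd (2*a*p - j) \<longleftrightarrow> \<not> p dvd j" if "j \<le> 2*a*p" for j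
  proof -
    have d: "p dvd 2*a*p" by simp
    have "j = 2*a*p - (2*a*p - j)" using that by simp
    hence "p dvd (2*a*p - j) \<longleftrightarrow> p dvd j"
      using d dvd_diff_nat by metis
    thus ?thesis by simp
  qed
  have "x \<in> SS p a \<union> (\<lambda>j. 2*a*p - j) ` SS p a" if "x \<in> SS p (2*a)" for x
  proof (cases "x \<le> a*p")
    case True thus ?thesis using that unfolding SS_def by auto
  next
    case False
    have "x \<noteq> 2*a*p" using that unfolding SS_def by auto
    hence "2*a*p - x \<in> SS p a" "x = 2*a*p - (2*a*p - x)"
      using that A[of x] False unfolding SS_def by auto
    thus ?thesis by blast
  qed
  moreover have "x \<in> SS p (2*a)" if "x \<in> SS p a \<union> (\<lambda>j. 2*a*p - j) ` SS p a" for x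
  proof -
    { assume "x \<in> SS p a" hence ?thesis unfolding SS_def by auto }
    moreover
    { fix j assume j: "j \<in> SS p a" "x = 2*a*p - j"
      have "j \<noteq> a*p" using j unfolding SS_def by auto
      hence ?thesis using j A[of j] unfolding SS_def by auto }
    ultimately show ?thesis using that by blast
  qed
  ultimately show "SS p (2*a) = SS p a \<union> (\<lambda>j. 2*a*p - j) ` SS p a" by blast
  show "SS p a \<inter> (\<lambda>j. 2*a*p - j) ` SS p a = {}"
  proof -
    { fix j assume j: "j \<in> SS p a" "2*a*p - j \<in> SS p a"
      have "j \<noteq> a*p" using j unfolding SS_def by auto
      hence False using j unfolding SS_def by auto }
    thus ?thesis by blast
  qed
qed

lemma QQ_double:
  fixes p a :: nat
  assumes "p > 0"
  shows "QQ p (2*a) = QQ p a * FF p a"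
proof -
  have inj: "inj_on (\<lambda>j. 2*a*p - j) (SS p a)"
    unfolding SS_def by (auto simp: inj_on_def)
  have "QQ p (2*a) = QQ p a * (\<Prod>j\<in>(\<lambda>j. 2*a*p - j) ` SS p a. int j)"
    unfolding QQ_def SS_double(1)[OF assms] by (rule prod.union_disjoint) (use SS_double(2)[OF assms] in auto)
  also have "(\<Prod>j\<in>(\<lambda>j. 2*a*p - j) ` SS p a. int j) = FF p a"
    unfolding FF_def by (subst prod.reindex[OF inj]) (auto simp: SS_def intro!: prod.cong)
  finally show ?thesis .
qed

lemma fact_binom2:
  fixes n :: nat
  shows "(fact (2*n) :: int) = fact n * fact n * int ((2*n) choose n)"
proof -
  have "fact n * fact (2*n - n) * ((2*n) choose n) = (fact (2*n) :: nat)"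
    by (rule binomial_fact_lemma) simp
  hence "fact n * fact n * ((2*n) choose n) = (fact (2*n) :: nat)"
    by (simp add: algebra_simps)
  hence "int (fact n * fact n * ((2*n) choose n)) = int (fact (2*n))" by (simp only:)
  thus ?thesis by (simp only: of_nat_mult of_nat_fact)
qed

lemma key_identity:
  fixes p a :: nat
  assumes "p > 0"
  shows "int ((2*a*p) choose (a*p)) * QQ p a = int ((2*a) choose a) * FF p a"
proof -
  have Qnz: "QQ p a \<noteq> 0" unfolding QQ_def SS_def by auto
  have pp: "int p ^ (2*a) = int p ^ a * int p ^ a" by (metis mult_2 power_add)
  have f1: "(fact (2*a*p) :: int) = fact (a*p) * fact (a*p) * int ((2*a*p) choose (a*p))"
    using fact_binom2[of "a*p"] by (simp add: mult.assoc)
  have f2: "(fact (2*a) :: int) = fact a * fact a * int ((2*a) choose a)"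
    by (rule fact_binom2)
  have "(fact (2*a*p) :: int) = int p ^ (2*a) * fact (2*a) * QQ p (2*a)"
    using fact_decomp[OF assms, of "2*a"] by simp
  also have "\<dots> = int p ^ (2*a) * (fact a * fact a * int ((2*a) choose a)) * (QQ p a * FF p a)"
    using f2 QQ_double[OF assms] by simp
  finally have "(int p ^ a * fact a * QQ p a) * (int p ^ a * fact a * QQ p a) * int ((2*a*p) choose (a*p))
      = int p ^ (2*a) * (fact a * fact a * int ((2*a) choose a)) * (QQ p a * FF p a)"
    using f1 fact_decomp[OF assms, of a] by simp
  moreover have "(int p ^ a * fact a * QQ p a) * (int p ^ a * fact a * QQ p a) * int ((2*a*p) choose (a*p))
      = (int p ^ (2*a) * fact a * fact a * QQ p a) * (int ((2*a*p) choose (a*p)) * QQ p a)"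
    unfolding pp by (simp add: algebra_simps)
  moreover have "int p ^ (2*a) * (fact a * fact a * int ((2*a) choose a)) * (QQ p a * FF p a)
      = (int p ^ (2*a) * fact a * fact a * QQ p a) * (int ((2*a) choose a) * FF p a)"
    by (simp add: algebra_simps)
  ultimately have "(int p ^ (2*a) * fact a * fact a * QQ p a) * (int ((2*a*p) choose (a*p)) * QQ p a)
      = (int p ^ (2*a) * fact a * fact a * QQ p a) * (int ((2*a) choose a) * FF p a)"
    by simp
  moreover have "int p ^ (2*a) * fact a * fact a * QQ p a \<noteq> 0" using assms Qnz by simp
  ultimately show ?thesis by (simp only: mult_cancel_left) simp
qed
lemma sigma_bij:
  fixes p a :: nat
  shows "bij_betw (\<lambda>j. a*p - j) (SS p a) (SS p a)"
proof (rule bij_betw_byWitness[where f'="\<lambda>j. a*p - j"])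
  have A: "\<not> p dvd (a*p - j) \<longleftrightarrow> \<not> p dvd j" if "j \<le> a*p" for j
  proof -
    have d: "p dvd a*p" by simp
    have "j = a*p - (a*p - j)" using that by simp
    hence "p dvd (a*p - j) \<longleftrightarrow> p dvd j"
      using d dvd_diff_nat by metis
    thus ?thesis by simp
  qed
  show "\<forall>j\<in>SS p a. a*p - (a*p - j) = j" unfolding SS_def by auto
  show "\<forall>j\<in>SS p a. a*p - (a*p - j) = j" unfolding SS_def by auto
  show "(\<lambda>j. a*p - j) ` SS p a \<subseteq> SS p a"
  proof
    fix x assume "x \<in> (\<lambda>j. a*p - j) ` SS p a"
    then obtain j where j: "j \<in> SS p a" "x = a*p - j" by auto
    have "j \<noteq> 0" using j unfolding SS_def by auto
    moreover have "j \<noteq> a*p" using j unfolding SS_def by auto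
    ultimately show "x \<in> SS p a" using j A[of j] unfolding SS_def by auto
  qed
  thus "(\<lambda>j. a*p - j) ` SS p a \<subseteq> SS p a" .
qed

lemma FF_sq:
  fixes p a :: nat
  shows "FF p a ^ 2 = (\<Prod>j\<in>SS p a. int j * (int (a*p) - int j) + 2 * int a ^ 2 * int p ^ 2)"
proof -
  have "FF p a = (\<Prod>j\<in>SS p a. int (2*a*p) - int (a*p - j))"
    unfolding FF_def by (rule prod.reindex_bij_betw[OF sigma_bij, symmetric])
  also have "\<dots> = (\<Prod>j\<in>SS p a. int (a*p) + int j)"
    by (rule prod.cong) (auto simp: SS_def of_nat_diff)
  finally have "FF p a ^ 2 = (\<Prod>j\<in>SS p a. int (2*a*p) - int j) * (\<Prod>j\<in>SS p a. int (a*p) + int j)"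
    unfolding FF_def power2_eq_square by (simp add: FF_def)
  also have "\<dots> = (\<Prod>j\<in>SS p a. (int (2*a*p) - int j) * (int (a*p) + int j))"
    by (simp add: prod.distrib)
  also have "\<dots> = (\<Prod>j\<in>SS p a. int j * (int (a*p) - int j) + 2 * int a ^ 2 * int p ^ 2)"
    by (rule prod.cong) (auto simp: algebra_simps power2_eq_square)
  finally show ?thesis .
qed

lemma QQ_sq:
  fixes p a :: nat
  shows "QQ p a ^ 2 = (\<Prod>j\<in>SS p a. int j * (int (a*p) - int j))"
proof -
  have "QQ p a = (\<Prod>j\<in>SS p a. int (a*p - j))"
    unfolding QQ_def by (rule prod.reindex_bij_betw[OF sigma_bij, symmetric])
  also have "\<dots> = (\<Prod>j\<in>SS p a. int (a*p) - int j)"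
    by (rule prod.cong) (auto simp: SS_def of_nat_diff)
  finally have "QQ p a ^ 2 = (\<Prod>j\<in>SS p a. int j) * (\<Prod>j\<in>SS p a. int (a*p) - int j)"
    unfolding power2_eq_square by (simp add: QQ_def)
  also have "\<dots> = (\<Prod>j\<in>SS p a. int j * (int (a*p) - int j))"
    by (simp add: prod.distrib)
  finally show ?thesis .
qed

lemma prod_expand:
  fixes w :: "'a \<Rightarrow> int"
  assumes "finite A"
  shows "\<exists>R. (\<Prod>j\<in>A. w j + c) = (\<Prod>j\<in>A. w j) + c * (\<Sum>j\<in>A. \<Prod>i\<in>A-{j}. w i) + c^2 * R"
  using assms
proof (induction A rule: finite_induct)
  case empty
  show ?case by (rule exI[of _ 0]) simp
next
  case (insert x A)
  then obtain R where R: "(\<Prod>j\<in>A. w j + c) = (\<Prod>j\<in>A. w j) + c * (\<Sum>j\<in>A. \<Prod>i\<in>A-{j}. w i) + c^2 * R"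
    by blast
  define E where "E = (\<Sum>j\<in>A. \<Prod>i\<in>A-{j}. w i)"
  have E': "(\<Sum>j\<in>insert x A. \<Prod>i\<in>insert x A-{j}. w i) = (\<Prod>j\<in>A. w j) + w x * E"
  proof -
    have "(\<Sum>j\<in>insert x A. \<Prod>i\<in>insert x A-{j}. w i) = (\<Prod>i\<in>insert x A-{x}. w i) + (\<Sum>j\<in>A. \<Prod>i\<in>insert x A-{j}. w i)"
      using insert by (simp add: sum.insert)
    also have "(\<Prod>i\<in>insert x A-{x}. w i) = (\<Prod>j\<in>A. w j)"
      using insert by (metis Diff_insert_absorb)
    also have "(\<Sum>j\<in>A. \<Prod>i\<in>insert x A-{j}. w i) = (\<Sum>j\<in>A. w x * (\<Prod>i\<in>A-{j}. w i))"
    proof (rule sum.cong)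
      fix j assume j: "j \<in> A"
      hence "insert x A - {j} = insert x (A - {j})" using insert by auto
      thus "(\<Prod>i\<in>insert x A-{j}. w i) = w x * (\<Prod>i\<in>A-{j}. w i)"
        using insert by simp
    qed simp
    finally show ?thesis by (simp add: E_def sum_distrib_left)
  qed
  show ?case
    apply (rule exI[of _ "E + w x * R + c * R"])
    using insert R E' unfolding E_def[symmetric]
    by (simp add: algebra_simps power2_eq_square)
qed

lemma fermat_int_nat:
  fixes p j :: nat
  assumes "prime p" "\<not> p dvd j"
  shows "[int j ^ (p - 1) = 1] (mod int p)"
proof -
  have "[j ^ (p - 1) = 1] (mod p)" by (rule fermat_theorem[OF assms])
  hence "[int (j ^ (p - 1)) = int 1] (mod int p)" by (simp only: cong_int_iff)
  thus ?thesis by simp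
qed

lemma odd_prime_ge3: "prime (p::nat) \<Longrightarrow> odd p \<Longrightarrow> p \<ge> 3"
proof -
  assume "prime p" "odd p"
  hence "p > 1" "p \<noteq> 2" using prime_gt_1_nat by auto
  thus "p \<ge> 3" by linarith
qed

lemma E_cong:
  fixes p a :: nat
  assumes "prime p" "odd p"
  shows "[(\<Sum>j\<in>SS p a. \<Prod>i\<in>SS p a-{j}. int i * (int (a*p) - int i))
          = - (QQ p a ^ 2 * (\<Sum>j\<in>SS p a. int j ^ (p-3)))] (mod int p)"
proof -
  have p0: "p > 0" "p \<ge> 3" using odd_prime_ge3[OF assms] by auto
  have cardS: "card (SS p a) = a*p - a" by (rule card_SS[OF p0(1)])
  have evenS: "even (card (SS p a))"
  proof -
    have "a*p - a = a*(p-1)" by (simp add: diff_mult_distrib2)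
    moreover have "even (p - 1)" using assms(2) p0 by simp
    ultimately show ?thesis using cardS by simp
  qed
  have trm: "[(\<Prod>i\<in>SS p a-{j}. int i * (int (a*p) - int i)) = - (QQ p a ^ 2 * int j ^ (p-3))] (mod int p)"
    if j: "j \<in> SS p a" for j
  proof -
    have nd: "\<not> p dvd j" using j unfolding SS_def by auto
    have "[(\<Prod>i\<in>SS p a-{j}. int i * (int (a*p) - int i)) = (\<Prod>i\<in>SS p a-{j}. - (int i ^ 2))] (mod int p)"
    proof (rule cong_prod)
      fix i
      have "int p dvd int i * (int (a*p) - int i) - (- (int i ^ 2))"
        by (simp add: algebra_simps power2_eq_square)
      thus "[int i * (int (a*p) - int i) = - (int i ^ 2)] (mod int p)"
        by (simp add: cong_iff_dvd_diff)
    qed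
    also have "(\<Prod>i\<in>SS p a-{j}. - (int i ^ 2)) = (-1) ^ card (SS p a - {j}) * (\<Prod>i\<in>SS p a-{j}. int i ^ 2)"
      by (subst prod_uminus) simp
    also have "card (SS p a - {j}) = card (SS p a) - 1" using j by simp
    also have "(-1::int) ^ (card (SS p a) - 1) = -1"
    proof -
      have "card (SS p a) \<noteq> 0" using j by (auto simp: card_eq_0_iff)
      hence "odd (card (SS p a) - 1)" using evenS by simp
      thus ?thesis by simp
    qed
    finally have c1: "[(\<Prod>i\<in>SS p a-{j}. int i * (int (a*p) - int i)) = - (\<Prod>i\<in>SS p a-{j}. int i ^ 2)] (mod int p)"
      by simp
    have eq: "int j ^ 2 * (\<Prod>i\<in>SS p a-{j}. int i ^ 2) = QQ p a ^ 2"
      unfolding QQ_def prod_power_distrib using j by (simp add: prod.remove)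
    have "[int j ^ 2 * (QQ p a ^ 2 * int j ^ (p-3)) = QQ p a ^ 2 * int j ^ (p - 1)] (mod int p)"
    proof -
      have "p - 1 = 2 + (p - 3)" using p0 by simp
      hence "int j ^ (p - 1) = int j ^ 2 * int j ^ (p-3)" by (metis power_add)
      thus ?thesis by (simp add: ac_simps)
    qed
    also have "[QQ p a ^ 2 * int j ^ (p - 1) = QQ p a ^ 2 * 1] (mod int p)"
      by (rule cong_mult[OF cong_refl fermat_int_nat[OF assms(1) nd]])
    finally have "[int j ^ 2 * (QQ p a ^ 2 * int j ^ (p-3)) = int j ^ 2 * (\<Prod>i\<in>SS p a-{j}. int i ^ 2)] (mod int p)"
      using eq by simp
    moreover have "coprime (int j ^ 2) (int p)"
    proof -
      have "coprime p j" using nd assms(1) by (simp add: prime_imp_coprime)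
      hence "coprime (int p) (int j)" by simp
      thus ?thesis by (simp add: coprime_commute)
    qed
    ultimately have "[QQ p a ^ 2 * int j ^ (p-3) = (\<Prod>i\<in>SS p a-{j}. int i ^ 2)] (mod int p)"
      using cong_mult_lcancel by blast
    hence "[- (\<Prod>i\<in>SS p a-{j}. int i ^ 2) = - (QQ p a ^ 2 * int j ^ (p-3))] (mod int p)"
      by (simp add: cong_minus_minus_iff cong_sym)
    with c1 show ?thesis by (rule cong_trans)
  qed
  have "[(\<Sum>j\<in>SS p a. \<Prod>i\<in>SS p a-{j}. int i * (int (a*p) - int i))
          = (\<Sum>j\<in>SS p a. - (QQ p a ^ 2 * int j ^ (p-3)))] (mod int p)"
    by (rule cong_sum) (rule trm)
  moreover have "(\<Sum>j\<in>SS p a. - (QQ p a ^ 2 * int j ^ (p-3))) = - (QQ p a ^ 2 * (\<Sum>j\<in>SS p a. int j ^ (p-3)))"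
    by (simp only: sum_negf sum_distrib_left)
  ultimately show ?thesis by (simp only:)
qed

lemma SS_Suc:
  fixes p a :: nat
  assumes "p > 1"
  shows "SS p (Suc a) = SS p a \<union> (\<lambda>i. a*p + i) ` {1..p-1}"
    and "SS p a \<inter> (\<lambda>i. a*p + i) ` {1..p-1} = {}"
proof -
  have nd: "\<not> p dvd (a*p + i)" if "1 \<le> i" "i \<le> p - 1" for i
  proof
    assume "p dvd (a*p + i)"
    hence "p dvd i" by (simp add: dvd_add_right_iff)
    thus False using that assms by (auto dest: dvd_imp_le)
  qed
  have "x \<in> SS p a \<union> (\<lambda>i. a*p + i) ` {1..p-1}" if x: "x \<in> SS p (Suc a)" for x
  proof (cases "x \<le> a*p")
    case True thus ?thesis using x unfolding SS_def by auto
  next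
    case False
    have "x \<noteq> a*p + p" using x unfolding SS_def by auto
    hence "x - a*p \<in> {1..p-1}" "x = a*p + (x - a*p)" using x False unfolding SS_def by auto
    thus ?thesis by blast
  qed
  moreover have "x \<in> SS p (Suc a)" if x: "x \<in> SS p a \<union> (\<lambda>i. a*p + i) ` {1..p-1}" for x
  proof -
    { assume "x \<in> SS p a" hence ?thesis unfolding SS_def by auto }
    moreover
    { fix i assume i: "i \<in> {1..p-1}" "x = a*p + i"
      have "\<not> p dvd x" using nd[of i] i by auto
      moreover have "x \<le> Suc a * p" using i assms by auto
      ultimately have ?thesis using i unfolding SS_def by auto }
    ultimately show ?thesis using x by blast
  qed
  ultimately show "SS p (Suc a) = SS p a \<union> (\<lambda>i. a*p + i) ` {1..p-1}" by blast
  show "SS p a \<inter> (\<lambda>i. a*p + i) ` {1..p-1} = {}" unfolding SS_def by auto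
qed

lemma block_sum:
  fixes p a k :: nat
  assumes "p > 1"
  shows "[(\<Sum>j\<in>SS p a. int j ^ k) = int a * (\<Sum>i\<in>{1..p-1}. int i ^ k)] (mod int p)"
proof (induction a)
  case 0
  show ?case by (simp add: SS_def)
next
  case (Suc a)
  have inj: "inj_on (\<lambda>i. a*p + i) {1..p-1}" by (auto simp: inj_on_def)
  have "(\<Sum>j\<in>SS p (Suc a). int j ^ k) = (\<Sum>j\<in>SS p a. int j ^ k) + (\<Sum>j\<in>(\<lambda>i. a*p + i) ` {1..p-1}. int j ^ k)"
    unfolding SS_Suc(1)[OF assms] by (rule sum.union_disjoint) (use SS_Suc(2)[OF assms] in auto)
  also have "(\<Sum>j\<in>(\<lambda>i. a*p + i) ` {1..p-1}. int j ^ k) = (\<Sum>i\<in>{1..p-1}. int (a*p + i) ^ k)"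
    by (simp only: sum.reindex[OF inj] comp_def)
  finally have eq: "(\<Sum>j\<in>SS p (Suc a). int j ^ k) = (\<Sum>j\<in>SS p a. int j ^ k) + (\<Sum>i\<in>{1..p-1}. int (a*p + i) ^ k)" .
  have "[(\<Sum>i\<in>{1..p-1}. int (a*p + i) ^ k) = (\<Sum>i\<in>{1..p-1}. int i ^ k)] (mod int p)"
  proof (rule cong_sum)
    fix i
    have "[int (a*p + i) = int i] (mod int p)"
      by (simp add: cong_iff_dvd_diff)
    thus "[int (a*p + i) ^ k = int i ^ k] (mod int p)" by (rule cong_pow)
  qed
  hence "[(\<Sum>j\<in>SS p (Suc a). int j ^ k) = int a * (\<Sum>i\<in>{1..p-1}. int i ^ k) + (\<Sum>i\<in>{1..p-1}. int i ^ k)] (mod int p)"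
    unfolding eq by (rule cong_add[OF Suc.IH])
  thus ?case by (simp add: algebra_simps)
qed

lemma sum_squares6:
  fixes n :: nat
  shows "6 * (\<Sum>i\<in>{1..n}. i^2) = n * (n+1) * (2*n+1)"
  by (induction n) (auto simp: power2_eq_square algebra_simps)

lemma power_sum_p3:
  fixes p :: nat
  assumes "prime p" "p \<ge> 5"
  shows "int p dvd (\<Sum>i\<in>{1..p-1}. int i ^ (p-3))"
proof -
  define iv where "iv i = i^(p-2) mod p" for i
  have p1: "p > 1" using assms by auto
  have ndv: "\<not> p dvd i" if "i \<in> {1..p-1}" for i
    using that p1 by (auto dest: dvd_imp_le)
  have inv_in: "iv i \<in> {1..p-1}" if i: "i \<in> {1..p-1}" for i
  proof -
    have "\<not> p dvd i^(p-2)" using ndv[OF i] assms(1) prime_dvd_power by blast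
    hence "iv i \<noteq> 0" unfolding iv_def by (simp add: mod_eq_0_iff_dvd)
    moreover have "iv i < p" unfolding iv_def using p1 by auto
    ultimately show ?thesis by auto
  qed
  have ferm: "[i^(p-1) = 1] (mod p)" if "i \<in> {1..p-1}" for i
    by (rule fermat_theorem[OF assms(1) ndv[OF that]])
  have inv_inv: "iv (iv i) = i" if i: "i \<in> {1..p-1}" for i
  proof -
    have e: "(p-2)*(p-2) = 1 + (p-1)*(p-3)"
    proof -
      obtain q where "p = q + 5" using assms(2) le_Suc_ex by (metis add.commute)
      thus ?thesis by (simp add: algebra_simps)
    qed
    have "iv (iv i) = (i^(p-2))^(p-2) mod p" unfolding iv_def by (simp add: power_mod)
    also have "(i^(p-2))^(p-2) = i * (i^(p-1))^(p-3)"
      by (simp add: power_mult[symmetric] e power_add)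
    finally have "iv (iv i) = i * (i^(p-1))^(p-3) mod p" .
    moreover have "[i * (i^(p-1))^(p-3) = i * 1^(p-3)] (mod p)"
      by (intro cong_mult cong_refl cong_pow ferm[OF i])
    ultimately have "iv (iv i) = i mod p" by (simp add: cong_def)
    thus ?thesis using i by auto
  qed
  have bij: "bij_betw iv {1..p-1} {1..p-1}"
    by (rule bij_betw_byWitness[where f'=iv]) (use inv_inv inv_in in auto)
  have c1: "[(\<Sum>i\<in>{1..p-1}. i ^ (p-3)) = (\<Sum>i\<in>{1..p-1}. (iv i)^2)] (mod p)"
  proof (rule cong_sum)
    fix i assume i: "i \<in> {1..p-1}"
    have "[(iv i)^2 = (i^(p-2))^2] (mod p)" unfolding iv_def by (simp add: cong_def power_mod)
    also have "(i^(p-2))^2 = i^(p-1) * i^(p-3)"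
    proof -
      have "(p-2)*2 = (p-1) + (p-3)" using assms by simp
      thus ?thesis by (simp add: power_mult[symmetric] power_add)
    qed
    also have "[i^(p-1) * i^(p-3) = 1 * i^(p-3)] (mod p)"
      by (intro cong_mult cong_refl ferm[OF i])
    finally show "[i ^ (p-3) = (iv i)^2] (mod p)" by (simp add: cong_sym)
  qed
  have c2: "(\<Sum>i\<in>{1..p-1}. (iv i)^2) = (\<Sum>i\<in>{1..p-1}. i^2)"
    by (rule sum.reindex_bij_betw[OF bij])
  have "p dvd 6 * (\<Sum>i\<in>{1..p-1}. i^2)"
    unfolding sum_squares6 using p1 by simp
  moreover have "\<not> p dvd 6"
  proof
    assume "p dvd 6"
    hence "p dvd 2 * 3" by simp
    hence "p dvd 2 \<or> p dvd 3" using assms(1) prime_dvd_mult_iff by blast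
    thus False using assms by (auto dest: dvd_imp_le)
  qed
  ultimately have "p dvd (\<Sum>i\<in>{1..p-1}. i^2)" using assms(1) prime_dvd_mult_iff by blast
  hence "p dvd (\<Sum>i\<in>{1..p-1}. i ^ (p-3))"
    using c1 c2 by (metis cong_dvd_iff)
  hence "int p dvd int (\<Sum>i\<in>{1..p-1}. i ^ (p-3))" by (simp only: int_dvd_int_iff)
  thus ?thesis by simp
qed

lemma even_card_SS:
  fixes p a :: nat
  assumes "prime p" "odd p"
  shows "even (card (SS p a))"
proof -
  have p0: "p > 0" "p \<ge> 3" using odd_prime_ge3[OF assms] by auto
  have "a*p - a = a*(p-1)" by (simp add: diff_mult_distrib2)
  moreover have "even (p - 1)" using assms(2) p0 by simp
  ultimately show ?thesis using card_SS[OF p0(1)] by simp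
qed

lemma QQ_ndvd:
  fixes p a :: nat
  assumes "prime p"
  shows "\<not> int p dvd QQ p a"
proof
  assume "int p dvd QQ p a"
  moreover have "prime (int p)" using assms by simp
  ultimately obtain j where "j \<in> SS p a" "int p dvd int j"
    unfolding QQ_def using prime_dvd_prod_iff[of "SS p a" "int p"] by auto
  thus False unfolding SS_def by (auto simp: int_dvd_int_iff)
qed

lemma FF_cong_QQ:
  fixes p a :: nat
  assumes "prime p" "odd p"
  shows "[FF p a = QQ p a] (mod int p)"
proof -
  have "[FF p a = (\<Prod>j\<in>SS p a. - int j)] (mod int p)"
    unfolding FF_def
  proof (rule cong_prod)
    fix j
    show "[int (2*a*p) - int j = - int j] (mod int p)" by (simp add: cong_iff_dvd_diff)
  qed
  also have "(\<Prod>j\<in>SS p a. - int j) = (-1) ^ card (SS p a) * QQ p a"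
    unfolding QQ_def by (subst prod_uminus) simp
  also have "(-1::int) ^ card (SS p a) = 1" using even_card_SS[OF assms] by simp
  finally show ?thesis by simp
qed

lemma sq_cancel:
  fixes F G :: int and p k :: nat
  assumes "prime p" "odd p" "[F = G] (mod int p)" "\<not> int p dvd G" "int p ^ k dvd F^2 - G^2"
  shows "int p ^ k dvd F - G"
proof -
  have pr: "prime (int p)" using assms(1) by simp
  have d1: "int p dvd F - G" using assms(3) by (simp add: cong_iff_dvd_diff)
  have "\<not> int p dvd F + G"
  proof
    assume "int p dvd F + G"
    hence "int p dvd (F + G) - (F - G)" using d1 by (rule dvd_diff)
    hence "int p dvd 2 * G" by (simp add: algebra_simps)
    hence "int p dvd 2 \<or> int p dvd G" using pr prime_dvd_mult_iff by blast
    moreover have "\<not> int p dvd 2"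
    proof
      assume "int p dvd 2"
      hence "p dvd 2" by (metis int_dvd_int_iff of_nat_numeral)
      hence "p \<le> 2" by (rule dvd_imp_le) simp
      moreover have "p > 1" using assms(1) prime_gt_1_nat by blast
      ultimately have "p = 2" by simp
      thus False using assms(2) by simp
    qed
    ultimately show False using assms(4) by blast
  qed
  hence "coprime (int p) (F + G)" using pr prime_imp_coprime by blast
  hence cp: "coprime (int p ^ k) (F + G)" by simp
  have "F^2 - G^2 = (F - G) * (F + G)" by (simp add: algebra_simps power2_eq_square)
  hence "int p ^ k dvd (F - G) * (F + G)" using assms(5) by simp
  thus ?thesis using cp by (simp add: coprime_dvd_mult_left_iff)
qed

lemma FF_expand:
  fixes p a :: nat
  shows "\<exists>R. FF p a ^ 2 = QQ p a ^ 2 + (2 * int a ^ 2 * int p ^ 2) *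
     (\<Sum>j\<in>SS p a. \<Prod>i\<in>SS p a-{j}. int i * (int (a*p) - int i)) + (2 * int a ^ 2 * int p ^ 2)^2 * R"
  unfolding FF_sq QQ_sq by (rule prod_expand) simp

lemma K5:
  fixes p a e :: nat
  assumes "prime p" "p \<ge> 5" "p ^ e dvd a"
  shows "int p ^ (3 + e) dvd FF p a - QQ p a"
proof -
  have odd: "odd p" using assms by (intro prime_odd_nat) auto
  have p1: "p > 1" using assms by simp
  define E where "E = (\<Sum>j\<in>SS p a. \<Prod>i\<in>SS p a-{j}. int i * (int (a*p) - int i))"
  define c where "c = 2 * int a ^ 2 * int p ^ 2"
  obtain R where R: "FF p a ^ 2 = QQ p a ^ 2 + c * E + c^2 * R"
    using FF_expand[of p a] unfolding E_def c_def by blast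
  have "[E = - (QQ p a ^ 2 * (\<Sum>j\<in>SS p a. int j ^ (p-3)))] (mod int p)"
    unfolding E_def by (rule E_cong[OF assms(1) odd])
  moreover have "[(\<Sum>j\<in>SS p a. int j ^ (p-3)) = int a * (\<Sum>i\<in>{1..p-1}. int i ^ (p-3))] (mod int p)"
    by (rule block_sum[OF p1])
  moreover have "[int a * (\<Sum>i\<in>{1..p-1}. int i ^ (p-3)) = 0] (mod int p)"
    using power_sum_p3[OF assms(1,2)] by (simp add: cong_0_iff)
  ultimately have "[(\<Sum>j\<in>SS p a. int j ^ (p-3)) = 0] (mod int p)" "[E = - (QQ p a ^ 2 * (\<Sum>j\<in>SS p a. int j ^ (p-3)))] (mod int p)"
    using cong_trans by blast+
  moreover have "[- (QQ p a ^ 2 * (\<Sum>j\<in>SS p a. int j ^ (p-3))) = - (QQ p a ^ 2 * 0)] (mod int p)"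
    using calculation(1) by (simp only: cong_minus_minus_iff) (rule cong_mult[OF cong_refl])
  ultimately have "[E = - (QQ p a ^ 2 * 0)] (mod int p)"
    using cong_trans by blast
  hence dE: "int p dvd E" by (simp add: cong_0_iff)
  obtain b where b: "a = p^e * b" using assms(3) by blast
  have dc: "int p ^ (2 + 2*e) dvd c"
  proof -
    have "c = int p ^ (2 + 2*e) * (2 * int b ^ 2)"
      unfolding c_def b by (simp add: power_mult_distrib power_add power_mult power2_eq_square algebra_simps)
    thus ?thesis by simp
  qed
  have "int p ^ (3 + e) dvd int p ^ (2 + 2*e) * int p"
  proof -
    have "int p ^ (3 + e) dvd int p ^ ((2 + 2*e) + 1)" by (rule le_imp_power_dvd) simp
    thus ?thesis by (simp only: power_add power_one_right)
  qed
  moreover have "int p ^ (2 + 2*e) * int p dvd c * E" using dc dE by (rule mult_dvd_mono)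
  ultimately have "int p ^ (3 + e) dvd c * E" by (rule dvd_trans)
  moreover have "int p ^ (3 + e) dvd c^2"
  proof -
    have "int p ^ (3 + e) dvd int p ^ ((2 + 2*e) + (2 + 2*e))" by (rule le_imp_power_dvd) simp
    hence "int p ^ (3 + e) dvd int p ^ (2 + 2*e) * int p ^ (2 + 2*e)" by (simp only: power_add)
    moreover have "int p ^ (2 + 2*e) * int p ^ (2 + 2*e) dvd c * c" using dc dc by (rule mult_dvd_mono)
    ultimately show ?thesis by (simp only: power2_eq_square dvd_trans)
  qed
  ultimately have "int p ^ (3 + e) dvd FF p a ^ 2 - QQ p a ^ 2"
    using R by (simp add: dvd_add)
  thus ?thesis
    by (rule sq_cancel[OF assms(1) odd FF_cong_QQ[OF assms(1) odd] QQ_ndvd[OF assms(1)]])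
qed

lemma three_dvd_aux: "(3::int) dvd a * (2 * a^2 + 1)"
proof -
  have "3 dvd a \<or> 3 dvd (a - 1) \<or> (3::int) dvd (a + 1)" by presburger
  hence "(3::int) dvd (a - 1) * a * (a + 1)" by (auto intro: dvd_mult dvd_mult2)
  moreover have "a * (2 * a^2 + 1) = 2 * ((a - 1) * a * (a + 1)) + 3 * a"
    by (simp add: algebra_simps power2_eq_square)
  ultimately show ?thesis by simp
qed

lemma K3b:
  fixes a e :: nat
  assumes "e \<ge> 1" "3 ^ e dvd a"
  shows "(3::int) ^ (3 + e) dvd FF 3 a - QQ 3 a"
proof -
  have pr: "prime (3::nat)" by simp
  have odd: "odd (3::nat)" by simp
  define E where "E = (\<Sum>j\<in>SS 3 a. \<Prod>i\<in>SS 3 a-{j}. int i * (int (a*3) - int i))"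
  define c where "c = 2 * int a ^ 2 * int 3 ^ 2"
  obtain R where R: "FF 3 a ^ 2 = QQ 3 a ^ 2 + c * E + c^2 * R"
    using FF_expand[of 3 a] unfolding E_def c_def by blast
  obtain b where b: "a = 3^e * b" using assms(2) by blast
  have dc: "(3::int) ^ (2 + 2*e) dvd c"
  proof -
    have "c = 3 ^ (2 + 2*e) * (2 * int b ^ 2)"
      unfolding c_def b by (simp add: power_mult_distrib power_add power_mult power2_eq_square algebra_simps)
    thus ?thesis by simp
  qed
  have le: "(3::int) ^ (3 + e) dvd 3 ^ (2 + 2*e)" by (rule le_imp_power_dvd) (use assms in simp)
  have "(3::int) ^ (3 + e) dvd c * E" using dvd_trans[OF le dc] by simp
  moreover have "(3::int) ^ (3 + e) dvd c^2" using dvd_trans[OF le dc] by (simp add: power2_eq_square)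
  ultimately have "int 3 ^ (3 + e) dvd FF 3 a ^ 2 - QQ 3 a ^ 2"
    using R by (simp add: dvd_add)
  hence "int 3 ^ (3 + e) dvd FF 3 a - QQ 3 a"
    by (rule sq_cancel[OF pr odd FF_cong_QQ[OF pr odd] QQ_ndvd[OF pr]])
  thus ?thesis by simp
qed

lemma K3a:
  fixes a :: nat
  shows "[FF 3 a = QQ 3 a * (1 + 9 * int a)] (mod 27)"
proof -
  have pr: "prime (3::nat)" by simp
  have odd: "odd (3::nat)" by simp
  define E where "E = (\<Sum>j\<in>SS 3 a. \<Prod>i\<in>SS 3 a-{j}. int i * (int (a*3) - int i))"
  define c where "c = 2 * int a ^ 2 * int 3 ^ 2"
  define Q where "Q = QQ 3 a"
  define F where "F = FF 3 a"
  obtain R where R: "F ^ 2 = Q ^ 2 + c * E + c^2 * R"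
    using FF_expand[of 3 a] unfolding E_def c_def F_def Q_def by blast
  have "[E = - (Q ^ 2 * (\<Sum>j\<in>SS 3 a. int j ^ (3-3)))] (mod int 3)"
    unfolding E_def Q_def by (rule E_cong[OF pr odd])
  moreover have "[(\<Sum>j\<in>SS 3 a. int j ^ (3-3)) = int a * (\<Sum>i\<in>{1..3-1}. int i ^ (3-3))] (mod int 3)"
    by (rule block_sum) simp
  ultimately have "[E = - (Q ^ 2 * (int a * 2))] (mod 3)"
    by (simp add: cong_mult cong_minus_minus_iff cong_trans)
  hence "(3::int) dvd E + Q^2 * (int a * 2)" by (simp add: cong_iff_dvd_diff)
  then obtain k where k: "E = 3 * k - Q^2 * (int a * 2)" by (metis dvd_def add_diff_cancel_right')
  define G where "G = Q * (1 + 9 * int a)"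
  have "F^2 - G^2 = 27 * (2 * int a^2 * k + 12 * int a^4 * R - 3 * int a^2 * Q^2)
        - 18 * Q^2 * (int a * (2 * int a^2 + 1))"
    unfolding R G_def k c_def by (simp add: algebra_simps power2_eq_square power4_eq_xxxx)
  moreover have "(27::int) dvd 18 * Q^2 * (int a * (2 * int a^2 + 1))"
  proof -
    obtain l where "int a * (2 * int a^2 + 1) = 3 * l" using three_dvd_aux by blast
    thus ?thesis by simp
  qed
  ultimately have d27: "int 3 ^ 3 dvd F^2 - G^2" by simp
  have "[G = Q * (1 + 0)] (mod int 3)" unfolding G_def
    by (intro cong_mult cong_refl cong_add) (simp add: cong_iff_dvd_diff)
  hence cG: "[F = G] (mod int 3)" using FF_cong_QQ[OF pr odd] unfolding F_def Q_def
    by (metis cong_sym cong_trans add_0_right mult_1_right)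
  have "\<not> int 3 dvd G"
  proof
    assume "int 3 dvd G"
    moreover have "[G = Q] (mod int 3)" using \<open>[G = Q * (1 + 0)] (mod int 3)\<close> by simp
    ultimately have "int 3 dvd Q" using cong_dvd_iff by blast
    thus False using QQ_ndvd[OF pr] unfolding Q_def by blast
  qed
  hence "int 3 ^ 3 dvd F - G" by (rule sq_cancel[OF pr odd cG _ d27])
  thus ?thesis unfolding F_def G_def Q_def by (simp add: cong_iff_dvd_diff)
qed



lemma split_val:
  fixes p n s x :: nat
  assumes "prime p" "p ^ n dvd s * x"
  shows "\<exists>j\<le>n. p ^ j dvd s \<and> p ^ (n - j) dvd x"
  using assms(2)
proof (induction n arbitrary: s)
  case 0 thus ?case by auto
next
  case (Suc n)
  show ?case
  proof (cases "p dvd s")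
    case True
    then obtain s' where s': "s = p * s'" by blast
    have "p * p ^ n dvd p * (s' * x)" using Suc.prems s' by (simp add: ac_simps)
    hence "p ^ n dvd s' * x" using assms(1) by (simp add: prime_gt_0_nat)
    then obtain j where "j \<le> n" "p ^ j dvd s'" "p ^ (n - j) dvd x" using Suc.IH by blast
    thus ?thesis using s' by (intro exI[of _ "Suc j"]) auto
  next
    case False
    hence "coprime p s" using assms(1) prime_imp_coprime by blast
    hence "coprime (p ^ Suc n) s" by simp
    hence "p ^ Suc n dvd x" using Suc.prems by (simp add: coprime_dvd_mult_right_iff)
    thus ?thesis by (intro exI[of _ 0]) auto
  qed
qed

lemma combine_dvd:
  fixes A D :: int and p u v n :: nat
  assumes "int p ^ u dvd A" "int p ^ v dvd D" "u + v = n"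
  shows "int p ^ n dvd A * D"
proof -
  have "int p ^ u * int p ^ v dvd A * D" using assms(1,2) by (rule mult_dvd_mono)
  thus ?thesis using assms(3) by (metis power_add)
qed

lemma diff_split:
  fixes Fs Ft Qs Qt :: int
  shows "Fs * Ft - Qs * Qt = Fs * (Ft - Qt) + Qt * (Fs - Qs)"
  by (simp add: algebra_simps)

theorem lemma2p11:
  fixes p r m s :: nat
  assumes "prime p" and "odd p" and "r \<ge> 1" and "m \<ge> 1"
    and "1 \<le> s" and "s \<le> m * p ^ (r - 1)"
  shows "(r = 1 \<and> p = 3 \<longrightarrow>
          [int ((m * p ^ (r - 1)) choose s) * int ((2 * s * p) choose (s * p))
             * int ((2 * (m * p ^ (r - 1) - s) * p) choose ((m * p ^ (r - 1) - s) * p))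
           = int (m choose s) * int ((2 * s) choose s) * int ((2 * (m - s)) choose (m - s))
             * (1 + 9 * int m)] (mod int p ^ (r + 2)))
       \<and> (r > 1 \<or> p > 3 \<longrightarrow>
          [int ((m * p ^ (r - 1)) choose s) * int ((2 * s * p) choose (s * p))
             * int ((2 * (m * p ^ (r - 1) - s) * p) choose ((m * p ^ (r - 1) - s) * p))
           = int ((m * p ^ (r - 1)) choose s) * int ((2 * s) choose s)
             * int ((2 * (m * p ^ (r - 1) - s)) choose (m * p ^ (r - 1) - s))] (mod int p ^ (r + 2)))"
proof -
  define N where "N = m * p ^ (r - 1)"
  define t where "t = N - s"
  have p0: "p > 0" "p \<ge> 3" using odd_prime_ge3[OF assms(1,2)] by auto
  have st: "s + t = N" using assms(6) unfolding t_def N_def by simp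
  define A where "A = int (N choose s)"
  define Bs where "Bs = int ((2*s*p) choose (s*p))"
  define Bt where "Bt = int ((2*t*p) choose (t*p))"
  define Cs where "Cs = int ((2*s) choose s)"
  define Ct where "Ct = int ((2*t) choose t)"
  define Qs where "Qs = QQ p s"
  define Qt where "Qt = QQ p t"
  define Fs where "Fs = FF p s"
  define Ft where "Ft = FF p t"
  have Is: "Bs * Qs = Cs * Fs" unfolding Bs_def Qs_def Cs_def Fs_def by (rule key_identity[OF p0(1)])
  have It: "Bt * Qt = Ct * Ft" unfolding Bt_def Qt_def Ct_def Ft_def by (rule key_identity[OF p0(1)])
  have cpU: "coprime (Qs * Qt) (int p ^ k)" for k
  proof -
    have "prime (int p)" using assms(1) by simp
    hence "coprime (int p) Qs" "coprime (int p) Qt"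
      using QQ_ndvd[OF assms(1)] prime_imp_coprime unfolding Qs_def Qt_def by blast+
    thus ?thesis by (simp add: coprime_commute)
  qed
  have LU: "A * Bs * Bt * (Qs * Qt) = A * Cs * Ct * (Fs * Ft)"
    using Is It by (metis mult.commute mult.left_commute)
  have case2: "[A * Bs * Bt = A * Cs * Ct] (mod int p ^ (r + 2))" if c2: "r > 1 \<or> p > 3"
  proof -
    have "p ^ (r - 1) dvd N" unfolding N_def by simp
    moreover have "s * (N choose s) = N * ((N - 1) choose (s - 1))"
      using assms(5) by (intro times_binomial_minus1_eq) simp
    ultimately have "p ^ (r - 1) dvd s * (N choose s)" by (metis dvd_mult2)
    then obtain j where j: "j \<le> r - 1" "p ^ j dvd s" "p ^ (r - 1 - j) dvd (N choose s)"
      using split_val[OF assms(1)] by blast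
    have jN: "p ^ j dvd N" using j(1) unfolding N_def by (simp add: le_imp_power_dvd dvd_mult)
    have jt: "p ^ j dvd t" unfolding t_def using jN j(2) by (rule dvd_diff_nat)
    have dA: "int p ^ (r - 1 - j) dvd A" unfolding A_def using j(3)
      by (metis int_dvd_int_iff of_nat_power)
    have "int p ^ (r + 2) dvd A * (Fs * Ft - Qs * Qt)"
    proof (cases "p \<ge> 5")
      case True
      have "int p ^ (3 + j) dvd Fs - Qs" unfolding Fs_def Qs_def by (rule K5[OF assms(1) True j(2)])
      moreover have "int p ^ (3 + j) dvd Ft - Qt" unfolding Ft_def Qt_def by (rule K5[OF assms(1) True jt])
      ultimately have "int p ^ (3 + j) dvd Fs * Ft - Qs * Qt" unfolding diff_split by (simp add: dvd_add)
      thus ?thesis using dA j(1) assms(3) by (intro combine_dvd[OF dA]) auto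
    next
      case False
      hence p3: "p = 3" using p0 assms(2) by presburger
      hence r1: "r > 1" using c2 by simp
      show ?thesis
      proof (cases "j \<ge> 1")
        case True
        have "int p ^ (3 + j) dvd Fs - Qs" unfolding Fs_def Qs_def p3 using K3b[OF True] j(2) p3 by simp
        moreover have "int p ^ (3 + j) dvd Ft - Qt" unfolding Ft_def Qt_def p3 using K3b[OF True] jt p3 by simp
        ultimately have "int p ^ (3 + j) dvd Fs * Ft - Qs * Qt" unfolding diff_split by (simp add: dvd_add)
        thus ?thesis using dA j(1) assms(3) by (intro combine_dvd[OF dA]) auto
      next
        case False
        hence j0: "j = 0" by simp
        have c27: "[Fs * Ft = (Qs * (1 + 9 * int s)) * (Qt * (1 + 9 * int t))] (mod 27)"
          unfolding Fs_def Ft_def Qs_def Qt_def p3 by (intro cong_mult K3a)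
        have eqX: "(Qs * (1 + 9 * int s)) * (Qt * (1 + 9 * int t)) = Qs * Qt * (1 + 9 * int N) + 27 * (3 * Qs * Qt * int s * int t)"
        proof -
          have "int N = int s + int t" using st by simp
          thus ?thesis by (simp add: algebra_simps)
        qed
        have d9: "(27::int) dvd 9 * int N"
        proof -
          have "p dvd N" unfolding N_def using r1 by (simp add: dvd_mult)
          hence "(3::int) dvd int N" using p3 by (metis int_dvd_int_iff of_nat_numeral)
          thus ?thesis by auto
        qed
        have eqD: "Fs * Ft - Qs * Qt = (Fs * Ft - (Qs * (1 + 9 * int s)) * (Qt * (1 + 9 * int t)))
            + Qs * Qt * (9 * int N) + 27 * (3 * Qs * Qt * int s * int t)"
          unfolding eqX by (simp add: algebra_simps)
        moreover have "27 dvd Fs * Ft - (Qs * (1 + 9 * int s)) * (Qt * (1 + 9 * int t))"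
          using c27 by (simp add: cong_iff_dvd_diff)
        hence "27 dvd (Fs * Ft - (Qs * (1 + 9 * int s)) * (Qt * (1 + 9 * int t)))
            + Qs * Qt * (9 * int N) + 27 * (3 * Qs * Qt * int s * int t)"
        proof -
          have a1: "27 dvd Qs * Qt * (9 * int N)" using d9 by (rule dvd_mult)
          have a2: "(27::int) dvd 27 * (3 * Qs * Qt * int s * int t)" by (rule dvd_triv_left)
          show ?thesis by (intro dvd_add a1 a2) fact
        qed
        hence "[Fs * Ft = Qs * Qt] (mod 27)"
          unfolding cong_iff_dvd_diff eqD .
        hence "int p ^ 3 dvd Fs * Ft - Qs * Qt" using p3 by (simp add: cong_iff_dvd_diff)
        moreover have "int p ^ (r - 1) dvd A" using dA j0 by simp
        ultimately show ?thesis using r1 by (intro combine_dvd) auto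
      qed
    qed
    hence "[A * Cs * Ct * (Fs * Ft) = A * Cs * Ct * (Qs * Qt)] (mod int p ^ (r + 2))"
    proof -
      assume h: "int p ^ (r + 2) dvd A * (Fs * Ft - Qs * Qt)"
      have "A * Cs * Ct * (Fs * Ft) - A * Cs * Ct * (Qs * Qt) = (Cs * Ct) * (A * (Fs * Ft - Qs * Qt))"
        by (simp add: algebra_simps)
      thus ?thesis unfolding cong_iff_dvd_diff using h by (simp only: dvd_mult)
    qed
    hence "[A * Bs * Bt * (Qs * Qt) = A * Cs * Ct * (Qs * Qt)] (mod int p ^ (r + 2))"
      unfolding LU .
    thus ?thesis using cong_mult_rcancel[OF cpU] by blast
  qed
  have case1: "[A * Bs * Bt = A * Cs * Ct * (1 + 9 * int m)] (mod int p ^ (r + 2))" if c1: "r = 1 \<and> p = 3"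
  proof -
    have p3: "p = 3" and r1: "r = 1" using c1 by auto
    have Nm: "N = m" unfolding N_def using r1 by simp
    have c27: "[Fs * Ft = (Qs * (1 + 9 * int s)) * (Qt * (1 + 9 * int t))] (mod 27)"
      unfolding Fs_def Ft_def Qs_def Qt_def p3 by (intro cong_mult K3a)
    have eqX: "(Qs * (1 + 9 * int s)) * (Qt * (1 + 9 * int t)) = Qs * Qt * (1 + 9 * int m) + 27 * (3 * Qs * Qt * int s * int t)"
    proof -
      have "int m = int s + int t" using st Nm by simp
      thus ?thesis by (simp add: algebra_simps)
    qed
    have eqD: "Fs * Ft - Qs * Qt * (1 + 9 * int m) = (Fs * Ft - (Qs * (1 + 9 * int s)) * (Qt * (1 + 9 * int t)))
        + 27 * (3 * Qs * Qt * int s * int t)"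
      unfolding eqX by (simp add: algebra_simps)
    have "27 dvd Fs * Ft - (Qs * (1 + 9 * int s)) * (Qt * (1 + 9 * int t))"
      using c27 by (simp add: cong_iff_dvd_diff)
    hence "27 dvd (Fs * Ft - (Qs * (1 + 9 * int s)) * (Qt * (1 + 9 * int t)))
        + 27 * (3 * Qs * Qt * int s * int t)"
      by (intro dvd_add dvd_triv_left)
    hence "[Fs * Ft = Qs * Qt * (1 + 9 * int m)] (mod 27)"
      unfolding cong_iff_dvd_diff eqD .
    hence c: "[A * Cs * Ct * (Fs * Ft) = A * Cs * Ct * (Qs * Qt * (1 + 9 * int m))] (mod 27)"
      by (rule cong_mult[OF cong_refl])
    have e1: "A * Cs * Ct * (1 + 9 * int m) * (Qs * Qt) = A * Cs * Ct * (Qs * Qt * (1 + 9 * int m))"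
      by (simp add: ac_simps)
    have e2: "int p ^ (r + 2) = 27" using p3 r1 by simp
    have "[A * Bs * Bt * (Qs * Qt) = A * Cs * Ct * (1 + 9 * int m) * (Qs * Qt)] (mod int p ^ (r + 2))"
      unfolding LU e1 e2 by (rule c)
    thus ?thesis using cong_mult_rcancel[OF cpU] by blast
  qed
  have Nm1: "r = 1 \<Longrightarrow> N = m" unfolding N_def by simp
  show ?thesis
    using case1 case2 Nm1 unfolding A_def Bs_def Bt_def Cs_def Ct_def t_def N_def
    by auto
qed

end
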